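(* Let $0 \neq q \in \mathbb{C}$ with $q^{2} \neq 1$, let $\xi = -(1+q)^{2}/(q-q^{-1})$, and define complex numbers $\phi_{\beta}$, $\beta \in \mathbb{Z}_{+}$, recursively by $\phi_{0} = 1$, $\phi_{1} = 1$, and $\phi_{\beta} = \phi_{\beta-1} + \xi [\beta-1]_{q^{2}} \phi_{\beta-2}$ for $\beta \geq 2$. Then for each $i \in \mathbb{N}$, $$\phi_{2i} = (1-q)^{-i}\, \Psi_{2i}, \qquad \phi_{2i+1} = [2i+1]_{q}\, \phi_{2i},$$ where $$\Psi_{2i} = \frac{[4]_{q}}{[2]_{q}}\, [3]_{q}\, \frac{[8]_{q}}{[4]_{q}}\, [5]_{q}\, \frac{[12]_{q}}{[6]_{q}}\, [7]_{q} \cdots [2i-1]_{q}\, \frac{[4i]_{q}}{[2i]_{q}} = \prod_{j=1}^{i} \frac{[4j]_{q}}{[2j]_{q}} \cdot \prod_{j=1}^{i-1} [2j+1]_{q}.$$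
   Context: $\mathbb{N} = \{1,2,3,\ldots\}$ and $\mathbb{Z}_{+} = \mathbb{N}\cup\{0\}$. For $0 \neq p \in \mathbb{C}$ with $p \neq 1$ and $n \in \mathbb{Z}_{+}$: $[n]_{p} = \frac{1-p^{n}}{1-p}$; this is used with $p = q$ and $p = q^{2}$. *)

theory Defs
  imports Complex_Main
begin

definition qnum :: "complex \<Rightarrow> nat \<Rightarrow> complex" where
  "qnum p n = (1 - p ^ n) / (1 - p)"

definition xi :: "complex \<Rightarrow> complex" where
  "xi q = - ((1 + q)^2) / (q - inverse q)"

fun phi :: "complex \<Rightarrow> nat \<Rightarrow> complex" where
  "phi q 0 = 1"
| "phi q (Suc 0) = 1"
| "phi q (Suc (Suc b)) = phi q (Suc b) + xi q * qnum (q^2) (Suc b) * phi q b"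

definition Psi :: "complex \<Rightarrow> nat \<Rightarrow> complex" where
  "Psi q i = (\<Prod>j=1..i. qnum q (4*j) / qnum q (2*j)) * (\<Prod>j=1..i-1. qnum q (2*j+1))"

end

theory Submission
  imports Defs
begin

lemma qfacts: "(q::complex)^2 \<noteq> 1 \<Longrightarrow> q \<noteq> 1 \<and> 1 + q \<noteq> 0"
  by (auto simp: power2_eq_1_iff add_eq_0_iff2 minus_equation_iff)

lemma L0: assumes "(q::complex)^2 \<noteq> 1" "q \<noteq> 0" shows "xi q = q*(1+q)/(1-q)"
proof -
  have h: "q \<noteq> 1" "1 + q \<noteq> 0" using qfacts[OF assms(1)] by auto
  have e: "q - inverse q = (q - 1)*(1+q)/q" using assms(2)
    by (simp add: field_simps)
  have "xi q = - ((1 + q)^2) * q / ((q - 1)*(1+q))" unfolding xi_def e by simp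
  also have "\<dots> = (-(1+q)*q)*(1+q)/((q-1)*(1+q))" by (simp add: power2_eq_square algebra_simps)
  also have "\<dots> = -(1+q)*q/(q-1)" using h(2) by (rule nonzero_mult_divide_mult_cancel_right)
  also have "\<dots> = q*(1+q)/(1-q)" using h(1)
    by (metis minus_diff_eq minus_divide_divide minus_divide_left mult.commute mult_minus_left)
  finally show ?thesis .
qed

lemma A1: assumes "d \<noteq> 0" "1 + (q::complex) \<noteq> 0" "d = 1 - q"
  shows "(1 - q*x)/d + q*(1+q)/d * ((1 - q^2*x^2)/(d*(1+q))) = (1+q^2*x)*((1-q*x)/d)/d"
proof -
  have c: "q*(1+q)/d * ((1 - q^2*x^2)/(d*(1+q))) = q*(1 - q^2*x^2)/(d*d)"
    using assms(2) by simp
  show ?thesis unfolding c using assms(1) apply (simp add: field_simps)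
  unfolding assms(3) by (simp add: algebra_simps power2_eq_square)
qed

lemma A2: assumes "d \<noteq> 0" "1 + (q::complex) \<noteq> 0" "d = 1 - q"
  shows "q*(1+q)/d * ((1 - (q^2)^2*x^2)/(d*(1+q))) = q * ((1-q^2*x)/d) * (1+q^2*x)/d"
proof -
  have c: "q*(1+q)/d * ((1 - (q^2)^2*x^2)/(d*(1+q))) = q*(1 - (q^2)^2*x^2)/(d*d)"
    using assms(2) by simp
  show ?thesis unfolding c using assms(1) apply (simp add: field_simps)
  unfolding assms(3) by (simp add: algebra_simps power2_eq_square)
qed

lemma e1: "1 - (q::complex)^2 = (1-q)*(1+q)" by (simp add: algebra_simps power2_eq_square)

lemma L1: assumes "(q::complex)^2 \<noteq> 1" "q \<noteq> 0"
  shows "qnum q (2*i+1) + xi q * qnum (q^2) (2*i+1) = (1+q^(2*i+2)) * qnum q (2*i+1)/(1-q)"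
proof -
  have p: "q^(2*i+1) = q*q^(2*i)" "(q^2)^(2*i+1) = q^2*(q^(2*i))^2" "q^(2*i+2) = q^2*q^(2*i)"
    by (simp_all add: power_add power_mult[symmetric] mult.commute power_mult_distrib power2_eq_square)
  have "1 - q \<noteq> 0" using qfacts[OF assms(1)] by auto
  then show ?thesis unfolding L0[OF assms] qnum_def p e1
    using A1[of "1-q" q] qfacts[OF assms(1)] by simp
qed

lemma L2: assumes "(q::complex)^2 \<noteq> 1" "q \<noteq> 0"
  shows "xi q * qnum (q^2) (2*i+2) = q * qnum q (2*i+2) * (1+q^(2*i+2))/(1-q)"
proof -
  have p: "(q^2)^(2*i+2) = (q^2)^2*(q^(2*i))^2" "q^(2*i+2) = q^2*q^(2*i)"
    by (simp_all add: power_add power_mult[symmetric] mult.commute power_mult_distrib power2_eq_square)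
  have "1 - q \<noteq> 0" using qfacts[OF assms(1)] by auto
  then show ?thesis unfolding L0[OF assms] qnum_def p e1
    using A2[of "1-q" q] qfacts[OF assms(1)] by simp
qed

lemma L3: assumes "(q::complex) \<noteq> 1" shows "qnum q (2*i+3) = 1 + q*qnum q (2*i+2)"
  using assms unfolding qnum_def by (simp add: field_simps power_add power3_eq_cube)

lemma L4: assumes "(q::complex) \<noteq> 1" "qnum q (2*j) \<noteq> 0" shows "qnum q (4*j) / qnum q (2*j) = 1 + q^(2*j)"
proof -
  have "qnum q (4*j) = qnum q (2*j) * (1 + q^(2*j))" unfolding qnum_def
    using assms(1) by (simp add: field_simps power_mult[symmetric] power2_eq_square) (simp add: algebra_simps power_add[symmetric])
  thus ?thesis using assms(2) by simp
qed

lemma Psi_Suc: assumes "(q::complex) \<noteq> 1" "qnum q (2*(Suc i)) \<noteq> 0" "i \<ge> 1"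
  shows "Psi q (Suc i) = Psi q i * (1 + q^(2*i+2)) * qnum q (2*i+1)"
proof -
  obtain k where k: "i = Suc k" using assms(3) by (cases i) auto
  have r: "qnum q (4*Suc i) / qnum q (2*Suc i) = 1 + q^(2*i+2)"
    using L4[OF assms(1,2)] by simp
  have "Psi q (Suc i) = (\<Prod>j=1..i. qnum q (4*j) / qnum q (2*j)) * (qnum q (4*Suc i) / qnum q (2*Suc i))
     * ((\<Prod>j=1..k. qnum q (2*j+1)) * qnum q (2*i+1))"
    unfolding Psi_def k by (simp add: prod.cl_ivl_Suc)
  also have "\<dots> = Psi q i * (1 + q^(2*i+2)) * qnum q (2*i+1)"
    unfolding r by (simp add: Psi_def k)
  finally show ?thesis .
qed

theorem lemma3:
  fixes q :: complex and i :: nat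
  assumes "q \<noteq> 0" and "q^2 \<noteq> 1" and "i \<ge> 1"
    and "\<forall>j\<in>{1..i}. qnum q (2*j) \<noteq> 0"
  shows "phi q (2*i) = inverse ((1 - q)^i) * Psi q i
       \<and> phi q (2*i+1) = qnum q (2*i+1) * phi q (2*i)"
  using assms(3,4)
proof (induction i rule: nat_induct_at_least)
  case base
  have h: "q \<noteq> 1" "1 + q \<noteq> 0" using qfacts[OF assms(2)] by auto
  have p2: "phi q 2 = (1 + q^2)/(1-q)"
  proof -
    have q1: "qnum q 1 = 1" "qnum (q^2) 1 = 1" unfolding qnum_def using h assms(2) by auto
    have "phi q 2 = qnum q 1 + xi q * qnum (q^2) 1" using q1 by (simp add: numeral_2_eq_2)
    also have "\<dots> = (1 + q^2)/(1-q)" using L1[OF assms(2,1), of 0] q1 by (simp add: power2_eq_square)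
    finally show ?thesis .
  qed
  have p3: "phi q 3 = qnum q 3 * phi q 2"
  proof -
    have "phi q 3 = phi q 2 + xi q * qnum (q^2) 2 * phi q 1"
      by (simp add: numeral_3_eq_3 numeral_2_eq_2)
    also have "\<dots> = phi q 2 + q * qnum q 2 * (1+q^2)/(1-q)"
      using L2[OF assms(2,1), of 0] by (simp add: numeral_2_eq_2 power2_eq_square)
    also have "\<dots> = qnum q 3 * phi q 2"
      unfolding p2 using L3[OF h(1), of 0] by (simp add: algebra_simps add_divide_distrib numeral_2_eq_2)
    finally show ?thesis .
  qed
  have "Psi q 1 = qnum q 4 / qnum q 2" unfolding Psi_def by simp
  also have "\<dots> = 1 + q^2" using L4[OF h(1), of 1] base by simp
  finally have "Psi q 1 = 1 + q^2" .
  then show ?case using p2 p3 by (simp add: divide_inverse mult.commute)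
next
  case (Suc i)
  have h: "q \<noteq> 1" "1 + q \<noteq> 0" using qfacts[OF assms(2)] by auto
  have IH: "phi q (2*i) = inverse ((1 - q)^i) * Psi q i"
     "phi q (2*i+1) = qnum q (2*i+1) * phi q (2*i)" using Suc by auto
  have ev: "phi q (2*Suc i) = phi q (2*i) * (1+q^(2*i+2)) * qnum q (2*i+1)/(1-q)"
  proof -
    have "phi q (2*Suc i) = phi q (2*i+1) + xi q * qnum (q^2) (2*i+1) * phi q (2*i)"
      by (simp add: numeral_2_eq_2)
    also have "\<dots> = phi q (2*i) * (qnum q (2*i+1) + xi q * qnum (q^2) (2*i+1))"
      unfolding IH(2) by (simp add: algebra_simps)
    also have "\<dots> = phi q (2*i) * (1+q^(2*i+2)) * qnum q (2*i+1)/(1-q)"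
      unfolding L1[OF assms(2,1)] by simp
    finally show ?thesis .
  qed
  have od: "phi q (2*Suc i+1) = qnum q (2*Suc i+1) * phi q (2*Suc i)"
  proof -
    have "phi q (2*Suc i+1) = phi q (2*Suc i) + xi q * qnum (q^2) (2*i+2) * phi q (2*i+1)"
      by (simp add: numeral_2_eq_2)
    also have "\<dots> = phi q (2*Suc i) + q * qnum q (2*i+2) * phi q (2*Suc i)"
      unfolding L2[OF assms(2,1)] ev IH(2) by (simp add: algebra_simps)
    also have "\<dots> = (1 + q * qnum q (2*i+2)) * phi q (2*Suc i)"
      by (simp only: distrib_right mult_1_left)
    also have "\<dots> = qnum q (2*Suc i+1) * phi q (2*Suc i)"
    proof -
      have eq: "2*Suc i+1 = 2*i+3" by simp
      show ?thesis unfolding eq L3[OF h(1), of i] ..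
    qed
    finally show ?thesis .
  qed
  have "qnum q (2*Suc i) \<noteq> 0" using Suc.prems(1) Suc.hyps by (simp del: mult_Suc_right)
  then have ps: "Psi q (Suc i) = Psi q i * (1 + q^(2*i+2)) * qnum q (2*i+1)"
    using Psi_Suc[OF h(1)] Suc.hyps by blast
  then have "phi q (2*Suc i) = inverse ((1 - q)^Suc i) * Psi q (Suc i)"
  proof -
    have iv: "inverse ((1-q)^Suc i) = inverse((1-q)^i) * inverse(1-q)"
      by (simp add: mult.commute)
    show ?thesis unfolding ev IH(1) iv ps divide_inverse
      by (simp only: mult_ac)
  qed
  then show ?case using od by simp
qed

end
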